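(* For $n\geqslant 5$ let $F_n$ be the tournament on $\{0,\ldots,n-1\}$ whose arcs are the pairs $(i,j)$ with $j\geqslant i+2$ together with the pairs $(i,i-1)$ for $1\leqslant i\leqslant n-1$. Then: (1) for every $n\geqslant 5$, $F_n$ is indecomposable; (2) for every $n\geqslant 6$, every vertex of $F_n$ other than $0$ and $n-1$ is critical, and $0$ and $n-1$ are not critical; (3) for every $n\geqslant 10$, $F_n$ has no strongly critical vertex.
   Context: A tournament $T=(V,A)$: finite vertex set, and for all distinct $x,y$ exactly one of $(x,y),(y,x)$ is an arc; write $x\to y$ for $(x,y)\in A$. For $X\subseteq V$, $T[X]$ is the induced subtournament and $T-x=T[V\setminus\{x\}]$. An interval of $T$ is $I\subseteq V$ such that for every $x\in V\setminus I$, either $x\to a$ for all $a\in I$ or $a\to x$ for all $a\in I$; trivial intervals are $\varnothing$, $V$, singletons; $T$ (with $\geqslant 3$ vertices) is indecomposable if all its intervals are trivial, decomposable otherwise. A vertex $x$ of an indecomposable tournament $T$ is critical if $T-x$ is decomposable. For an indecomposable tournament $T$ with at least $5$ vertices, a vertex $x$ is strongly critical if for every $X\subseteq V(T)$ with $x\in X$, $|X|\geqslant 5$ and $T[X]$ indecomposable, $x$ is a critical vertex of $T[X]$. *)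

theory Defs
  imports Main
begin

definition tournament :: "'a set \<Rightarrow> ('a \<times> 'a) set \<Rightarrow> bool" where
  "tournament V A \<longleftrightarrow> finite V \<and> A \<subseteq> V \<times> V \<and> (\<forall>x\<in>V. (x, x) \<notin> A) \<and>
     (\<forall>x\<in>V. \<forall>y\<in>V. x \<noteq> y \<longrightarrow> ((x, y) \<in> A \<longleftrightarrow> (y, x) \<notin> A))"

definition induced :: "('a \<times> 'a) set \<Rightarrow> 'a set \<Rightarrow> ('a \<times> 'a) set" where
  "induced A X = A \<inter> (X \<times> X)"

definition interval :: "'a set \<Rightarrow> ('a \<times> 'a) set \<Rightarrow> 'a set \<Rightarrow> bool" where
  "interval V A I \<longleftrightarrow> I \<subseteq> V \<and>
     (\<forall>x\<in>V - I. (\<forall>a\<in>I. (x, a) \<in> A) \<or> (\<forall>a\<in>I. (a, x) \<in> A))"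

definition trivial_interval :: "'a set \<Rightarrow> 'a set \<Rightarrow> bool" where
  "trivial_interval V I \<longleftrightarrow> I = {} \<or> I = V \<or> card I = 1"

definition indecomposable :: "'a set \<Rightarrow> ('a \<times> 'a) set \<Rightarrow> bool" where
  "indecomposable V A \<longleftrightarrow> card V \<ge> 3 \<and> (\<forall>I. interval V A I \<longrightarrow> trivial_interval V I)"

definition decomposable :: "'a set \<Rightarrow> ('a \<times> 'a) set \<Rightarrow> bool" where
  "decomposable V A \<longleftrightarrow> card V \<ge> 3 \<and> \<not> indecomposable V A"

definition critical :: "'a set \<Rightarrow> ('a \<times> 'a) set \<Rightarrow> 'a \<Rightarrow> bool" where
  "critical V A x \<longleftrightarrow> indecomposable V A \<and> x \<in> V \<and>
     decomposable (V - {x}) (induced A (V - {x}))"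

definition strongly_critical :: "'a set \<Rightarrow> ('a \<times> 'a) set \<Rightarrow> 'a \<Rightarrow> bool" where
  "strongly_critical V A x \<longleftrightarrow> indecomposable V A \<and> card V \<ge> 5 \<and> x \<in> V \<and>
     (\<forall>X. X \<subseteq> V \<and> x \<in> X \<and> card X \<ge> 5 \<and> indecomposable X (induced A X)
        \<longrightarrow> critical X (induced A X) x)"

definition F_verts :: "nat \<Rightarrow> nat set" where
  "F_verts n = {0..<n}"

definition F_arcs :: "nat \<Rightarrow> (nat \<times> nat) set" where
  "F_arcs n = {(i, j). i < n \<and> j < n \<and> (i + 2 \<le> j \<or> (1 \<le> i \<and> j = i - 1))}"

end

theory Submission
  imports Defs
begin

lemma arcs_iff: "(i, j) \<in> F_arcs n \<longleftrightarrow> i < n \<and> j < n \<and> (i + 2 \<le> j \<or> (1 \<le> i \<and> j = i - 1))"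
  unfolding F_arcs_def by simp

lemma ind_iff: "(x, y) \<in> induced A W \<longleftrightarrow> (x, y) \<in> A \<and> x \<in> W \<and> y \<in> W"
  unfolding induced_def by auto

lemma window_indec:
  assumes "a + m \<le> n" "5 \<le> m"
  shows "indecomposable {a..<a+m} (induced (F_arcs n) {a..<a+m})"
proof -
  define W where "W = {a..<a+m}"
  define A where "A = induced (F_arcs n) W"
  define b where "b = a + m - 1"
  have Aiff: "(x, y) \<in> A \<longleftrightarrow> x \<in> W \<and> y \<in> W \<and> (x + 2 \<le> y \<or> (1 \<le> x \<and> y = x - 1))" for x y
    unfolding A_def ind_iff arcs_iff W_def using assms by auto
  have Wiff: "x \<in> W \<longleftrightarrow> a \<le> x \<and> x \<le> b" for x unfolding W_def b_def using assms by auto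
  have "interval W A I \<longrightarrow> trivial_interval W I" for I
  proof
    assume iv: "interval W A I"
    have IW: "I \<subseteq> W" and ivp: "\<And>x. x \<in> W - I \<Longrightarrow> (\<forall>y\<in>I. (x, y) \<in> A) \<or> (\<forall>y\<in>I. (y, x) \<in> A)"
      using iv unfolding interval_def by auto
    show "trivial_interval W I"
    proof (rule ccontr)
      assume nt: "\<not> trivial_interval W I"
      have finI: "finite I" using IW finite_subset unfolding W_def by blast
      have ne: "I \<noteq> {}" and c1: "card I \<noteq> 1" and nW: "I \<noteq> W" using nt unfolding trivial_interval_def by auto
      obtain p q where pq: "p \<in> I" "q \<in> I" "p \<noteq> q"
        proof -
        obtain p where "p \<in> I" using ne by blast
        moreover have "I \<noteq> {p}" using c1 by auto
        ultimately show ?thesis using that by blast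
      qed
      have aI: "a \<in> I"
      proof (rule ccontr)
        assume "a \<notin> I"
        define p0 where "p0 = Min I"
        have p0I: "p0 \<in> I" using finI ne p0_def by simp
        have p0m: "\<And>y. y \<in> I \<Longrightarrow> p0 \<le> y" using finI p0_def by simp
        obtain q0 where q0: "q0 \<in> I" "q0 \<noteq> p0" using pq by metis
        have "p0 < q0" using p0m q0 by force
        have "p0 \<in> W" using p0I IW by blast
        then have "a \<le> p0" "p0 \<le> b" using Wiff by auto
        moreover have "p0 \<noteq> a" using \<open>a \<notin> I\<close> p0I by blast
        ultimately have "p0 > a" by linarith
        have "p0 - 1 \<in> W" unfolding Wiff using \<open>p0 > a\<close> \<open>p0 \<le> b\<close> by linarith
        moreover have "p0 - 1 \<notin> I" using p0m \<open>p0 > a\<close> by fastforce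
        ultimately have "p0 - 1 \<in> W - I" by blast
        from ivp[OF \<open>p0 - 1 \<in> W - I\<close>] show False
          using p0I q0 \<open>p0 < q0\<close> \<open>p0 > a\<close> unfolding Aiff by auto
      qed
      have bI: "b \<in> I"
      proof (rule ccontr)
        assume "b \<notin> I"
        define p0 where "p0 = Max I"
        have p0I: "p0 \<in> I" using finI ne p0_def by simp
        have p0m: "\<And>y. y \<in> I \<Longrightarrow> y \<le> p0" using finI p0_def by simp
        obtain q0 where q0: "q0 \<in> I" "q0 \<noteq> p0" using pq by metis
        have "q0 < p0" using p0m q0 by force
        have "p0 < b" using \<open>b \<notin> I\<close> p0I IW Wiff by (metis le_neq_implies_less subsetD)
        have "p0 + 1 \<in> W - I" using p0I IW p0m Wiff \<open>p0 < b\<close> by fastforce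
        from ivp[OF this] show False
          using p0I q0 \<open>q0 < p0\<close> \<open>p0 < b\<close> unfolding Aiff by auto
      qed
      have two: "k = a + 1 \<or> k = b - 1" if "k \<in> W - I" for k
        using ivp[OF that] aI bI that unfolding Aiff Wiff by auto
      have mb: "b \<ge> a + 4" using assms b_def by simp
      obtain k where k: "k \<in> W - I" using nW IW by blast
      have "k = a + 1 \<or> k = b - 1" using two k .
      then show False
      proof
        assume ka: "k = a + 1"
        have "a + 2 \<in> I" using two[of "a+2"] mb Wiff by fastforce
        then show False using ivp[OF k] aI ka mb unfolding Aiff Wiff by auto
      next
        assume kb: "k = b - 1"
        have "b - 2 \<in> I" using two[of "b-2"] mb Wiff by fastforce
        then show False using ivp[OF k] bI kb mb unfolding Aiff Wiff by auto
      qed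
    qed
  qed
  moreover have "card W \<ge> 3" using assms W_def by simp
  ultimately show ?thesis unfolding indecomposable_def W_def A_def by blast
qed

lemma ind_ind: "Y \<subseteq> X \<Longrightarrow> induced (induced A X) Y = induced A Y"
  unfolding induced_def by auto

lemma ind_full: "induced (F_arcs n) {0..<n} = F_arcs n"
  unfolding induced_def F_arcs_def by auto

lemma part1: "n \<ge> 5 \<Longrightarrow> tournament (F_verts n) (F_arcs n) \<and> indecomposable (F_verts n) (F_arcs n)"
proof
  show "tournament (F_verts n) (F_arcs n)"
    unfolding tournament_def F_verts_def by (auto simp: arcs_iff)
  assume "n \<ge> 5"
  then show "indecomposable (F_verts n) (F_arcs n)"
    using window_indec[of 0 n n] by (simp add: F_verts_def ind_full)
qed

lemma part2a:
  assumes n: "n \<ge> 6" and x: "x \<in> F_verts n" "x \<noteq> 0" "x \<noteq> n - 1"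
  shows "critical (F_verts n) (F_arcs n) x"
proof -
  let ?V = "{0..<n} - {x}"
  have xn: "x < n" using x unfolding F_verts_def by simp
  have c: "card ?V \<ge> 3" using n xn by simp
  have "\<not> indecomposable ?V (induced (F_arcs n) ?V)"
  proof (cases "x \<le> n - 3")
    case True
    let ?I = "{x+1..<n}"
    have "interval ?V (induced (F_arcs n) ?V) ?I"
      unfolding interval_def ind_iff arcs_iff using xn by auto
    moreover have "\<not> trivial_interval ?V ?I"
    proof -
      have "0 \<notin> ?I" "0 \<in> ?V" using x xn by auto
      then have "?I \<noteq> ?V" by blast
      moreover have "?I \<noteq> {}" using True n by auto
      moreover have "card ?I \<noteq> 1" using True n by simp
      ultimately show ?thesis unfolding trivial_interval_def by blast
    qed
    ultimately show ?thesis unfolding indecomposable_def by blast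
  next
    case False
    then have xe: "x = n - 2" using xn x by auto
    let ?I = "{0..<x}"
    have "interval ?V (induced (F_arcs n) ?V) ?I"
      unfolding interval_def ind_iff arcs_iff using xn xe by auto
    moreover have "\<not> trivial_interval ?V ?I"
    proof -
      have "n - 1 \<notin> ?I" "n - 1 \<in> ?V" using xe n by auto
      then have "?I \<noteq> ?V" by blast
      moreover have "?I \<noteq> {}" using xe n by auto
      moreover have "card ?I \<noteq> 1" using xe n by simp
      ultimately show ?thesis unfolding trivial_interval_def by blast
    qed
    ultimately show ?thesis unfolding indecomposable_def by blast
  qed
  then have "decomposable ?V (induced (F_arcs n) ?V)" using c unfolding decomposable_def by blast
  moreover have "indecomposable (F_verts n) (F_arcs n)" using part1[of n] n by simp
  ultimately show ?thesis using x unfolding critical_def F_verts_def by blast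
qed

lemma part2b:
  assumes n: "n \<ge> 6"
  shows "\<not> critical (F_verts n) (F_arcs n) 0 \<and> \<not> critical (F_verts n) (F_arcs n) (n - 1)"
proof -
  have e1: "{0..<n} - {0} = {1..<1 + (n - 1)}" using n by auto
  have e2: "{0..<n} - {n - 1} = {0..<0 + (n - 1)}" using n by auto
  show ?thesis
    using window_indec[of 1 "n-1" n] window_indec[of 0 "n-1" n] n
    unfolding critical_def decomposable_def F_verts_def e1 e2 by auto
qed

lemma part3:
  assumes n: "n \<ge> 10"
  shows "\<not> strongly_critical (F_verts n) (F_arcs n) x"
proof
  assume sc: "strongly_critical (F_verts n) (F_arcs n) x"
  then have xn: "x < n" unfolding strongly_critical_def F_verts_def by auto
  obtain c where X: "{c..<c+6} \<subseteq> F_verts n" "x \<in> {c..<c+6}" "c + 6 \<le> n"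
    and Y: "{c..<c+6} - {x} = {c + 1..<(c+1) + 5} \<or> {c..<c+6} - {x} = {c..<c + 5}"
  proof (cases "x \<ge> 5")
    case True
    have e: "{c..<c+6} - {c+5} = {c..<(c::nat)+5}" for c by auto
    have "x = (x - 5) + 5" using True by simp
    then have "{x-5..<x-5+6} - {x} = {x-5..<x-5+5}" using e[of "x-5"] by metis
    moreover have "{x-5..<x-5+6} \<subseteq> F_verts n" unfolding F_verts_def using True xn by (simp add: subset_iff)
    moreover have "x \<in> {x-5..<x-5+6}" using True by simp
    moreover have "x - 5 + 6 \<le> n" using True xn by simp
    ultimately show ?thesis using that[of "x - 5"] by blast
  next
    case False
    have "{c..<c+6} - {c} = {c+1..<c+1+(5::nat)}" for c by auto
    then have "{x..<x+6} - {x} = {x+1..<x+1+5}" by blast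
    moreover have "{x..<x+6} \<subseteq> F_verts n" unfolding F_verts_def using False n by (simp add: subset_iff)
    moreover have "x \<in> {x..<x+6}" by simp
    moreover have "x + 6 \<le> n" using False n by simp
    ultimately show ?thesis using that[of x] by blast
  qed
  let ?X = "{c..<c+6}"
  have "indecomposable ?X (induced (F_arcs n) ?X)" using window_indec[of c 6 n] X by simp
  moreover have "card ?X \<ge> 5" by simp
  ultimately have "critical ?X (induced (F_arcs n) ?X) x" using sc X unfolding strongly_critical_def by blast
  then have "\<not> indecomposable (?X - {x}) (induced (F_arcs n) (?X - {x}))"
    unfolding critical_def decomposable_def by (simp add: ind_ind)
  moreover have "indecomposable (?X - {x}) (induced (F_arcs n) (?X - {x}))"
    using Y window_indec[of "c+1" 5 n] window_indec[of c 5 n] X by auto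
  ultimately show False by blast
qed

theorem mainTheorem5:
  shows "(\<forall>n\<ge>5. tournament (F_verts n) (F_arcs n) \<and> indecomposable (F_verts n) (F_arcs n))
       \<and> (\<forall>n\<ge>6. (\<forall>x\<in>F_verts n. x \<noteq> 0 \<and> x \<noteq> n - 1 \<longrightarrow> critical (F_verts n) (F_arcs n) x)
                 \<and> \<not> critical (F_verts n) (F_arcs n) 0
                 \<and> \<not> critical (F_verts n) (F_arcs n) (n - 1))
       \<and> (\<forall>n\<ge>10. \<not> (\<exists>x. strongly_critical (F_verts n) (F_arcs n) x))"
  using part1 part2a part2b part3 by blast

end
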